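(* Let $n\ge 1$, $L>0$, $D\subseteq\mathbb{R}$ compact, and let $T$ be an input-dependent CPTP map on $n$ qubits (for each $x\in D\cap[-L,L]$, $T(x)$ is a CPTP map on $2^n\times 2^n$ complex matrices) such that for some $0<\epsilon\le1$ and all $x\in D\cap[-L,L]$, $\sup_{A\in H_0(2^n),A\ne0}\|T(x)A\|_2/\|A\|_2\le 1-\epsilon$, where $H_0(2^n)$ is the space of traceless Hermitian $2^n\times 2^n$ matrices. Let $h$ be any real-valued function on the set $\mathcal{D}(\mathbb{C}^{2^n})$ of density operators. Then for every $u\in K_L(D)$ and every $k\in\mathbb{Z}$, and every choice of density operators $\rho_{-N}\in\mathcal{D}(\mathbb{C}^{2^n})$, $N\ge 0$, the limit $$\lim_{N\to\infty} T(u_k)T(u_{k-1})\cdots T(u_{k-N})\,\rho_{-N}$$ exists in $\mathcal{D}(\mathbb{C}^{2^n})$ (with respect to $\|\cdot\|_2$) and is independent of the choice of the $\rho_{-N}$. Consequently the filter $M_h^T:K_L(D)\to\mathbb{R}^{\mathbb{Z}}$, $M_h^T(u)_k=h\big(\lim_{N\to\infty}T(u_k)T(u_{k-1})\cdots T(u_{k-N})\rho_{-N}\big)$, is well-defined.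
   Context: $\|\cdot\|_2$ is the Schatten 2-norm. $K_L(D)$ is the set of real sequences $\{u_k\}_{k\in\mathbb{Z}}$ with $u_k\in D\cap[-L,L]$ for all $k$; $\mathbb{R}^{\mathbb{Z}}$ is the set of real bi-infinite sequences. *)

theory Defs
  imports Complex_Main "Jordan_Normal_Form.Matrix"
begin

definition mat_trace :: "complex mat \<Rightarrow> complex" where
  "mat_trace A = (\<Sum>i<dim_row A. A $$ (i, i))"

definition hermitian_mat :: "nat \<Rightarrow> complex mat \<Rightarrow> bool" where
  "hermitian_mat d A \<longleftrightarrow> A \<in> carrier_mat d d \<and>
     (\<forall>i<d. \<forall>j<d. A $$ (j, i) = cnj (A $$ (i, j)))"

definition psd_mat :: "nat \<Rightarrow> complex mat \<Rightarrow> bool" where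
  "psd_mat d A \<longleftrightarrow> hermitian_mat d A \<and>
     (\<forall>v \<in> carrier_vec d. 0 \<le> Re (\<Sum>i<d. \<Sum>j<d. cnj (v $ i) * A $$ (i, j) * v $ j))"

definition density_op :: "nat \<Rightarrow> complex mat \<Rightarrow> bool" where
  "density_op d \<rho> \<longleftrightarrow> psd_mat d \<rho> \<and> mat_trace \<rho> = 1"

definition schatten2 :: "complex mat \<Rightarrow> real" where
  "schatten2 A = sqrt (\<Sum>i<dim_row A. \<Sum>j<dim_col A. (cmod (A $$ (i, j)))\<^sup>2)"

definition linear_map_mat :: "nat \<Rightarrow> (complex mat \<Rightarrow> complex mat) \<Rightarrow> bool" where
  "linear_map_mat d T \<longleftrightarrow>
     (\<forall>A \<in> carrier_mat d d. T A \<in> carrier_mat d d) \<and>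
     (\<forall>A \<in> carrier_mat d d. \<forall>B \<in> carrier_mat d d. T (A + B) = T A + T B) \<and>
     (\<forall>A \<in> carrier_mat d d. \<forall>c. T (c \<cdot>\<^sub>m A) = c \<cdot>\<^sub>m T A)"

text \<open>(id_k \<otimes> T) applied to a (k*d)x(k*d) matrix viewed as a k x k array of d x d blocks.\<close>
definition block_of :: "nat \<Rightarrow> complex mat \<Rightarrow> nat \<Rightarrow> nat \<Rightarrow> complex mat" where
  "block_of d M a b = mat d d (\<lambda>(i, j). M $$ (a * d + i, b * d + j))"

definition id_tensor :: "nat \<Rightarrow> nat \<Rightarrow> (complex mat \<Rightarrow> complex mat) \<Rightarrow> complex mat \<Rightarrow> complex mat" where
  "id_tensor k d T M = mat (k * d) (k * d)
     (\<lambda>(r, c). T (block_of d M (r div d) (c div d)) $$ (r mod d, c mod d))"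

definition completely_positive :: "nat \<Rightarrow> (complex mat \<Rightarrow> complex mat) \<Rightarrow> bool" where
  "completely_positive d T \<longleftrightarrow>
     (\<forall>k \<ge> 1. \<forall>M. psd_mat (k * d) M \<longrightarrow> psd_mat (k * d) (id_tensor k d T M))"

definition trace_preserving :: "nat \<Rightarrow> (complex mat \<Rightarrow> complex mat) \<Rightarrow> bool" where
  "trace_preserving d T \<longleftrightarrow> (\<forall>A \<in> carrier_mat d d. mat_trace (T A) = mat_trace A)"

definition CPTP :: "nat \<Rightarrow> (complex mat \<Rightarrow> complex mat) \<Rightarrow> bool" where
  "CPTP d T \<longleftrightarrow> linear_map_mat d T \<and> completely_positive d T \<and> trace_preserving d T"

definition K_L :: "real \<Rightarrow> real set \<Rightarrow> (int \<Rightarrow> real) set" where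
  "K_L L D = {u. \<forall>k. u k \<in> D \<inter> {-L..L}}"

text \<open>chain T u k N \<rho> = T(u_k) T(u_{k-1}) ... T(u_{k-N}) \<rho>.\<close>
fun chain :: "(real \<Rightarrow> complex mat \<Rightarrow> complex mat) \<Rightarrow> (int \<Rightarrow> real) \<Rightarrow> int \<Rightarrow> nat
      \<Rightarrow> complex mat \<Rightarrow> complex mat" where
  "chain T u k 0 \<rho> = T (u k) \<rho>"
| "chain T u k (Suc N) \<rho> = chain T u k N (T (u (k - int N - 1)) \<rho>)"

end

theory Submission
  imports Defs
begin

lemma dens_carrier: "density_op d \<rho> \<Longrightarrow> \<rho> \<in> carrier_mat d d"
  unfolding density_op_def psd_mat_def hermitian_mat_def by blast

lemma minus_as_add: "(a::complex mat) \<in> carrier_mat d d \<Longrightarrow> b \<in> carrier_mat d d \<Longrightarrow> a - b = a + (-1) \<cdot>\<^sub>m b"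
  by (rule eq_matI) auto

lemma lin_minus:
  assumes "linear_map_mat d T" "a \<in> carrier_mat d d" "b \<in> carrier_mat d d"
  shows "T (a - b) = T a - T b"
proof -
  have c: "T b \<in> carrier_mat d d" "T a \<in> carrier_mat d d" using assms unfolding linear_map_mat_def by auto
  have "T (a - b) = T (a + (-1) \<cdot>\<^sub>m b)" using assms minus_as_add by metis
  also have "\<dots> = T a + T ((-1) \<cdot>\<^sub>m b)" using assms unfolding linear_map_mat_def by auto
  also have "\<dots> = T a + (-1) \<cdot>\<^sub>m T b" using assms unfolding linear_map_mat_def by auto
  also have "\<dots> = T a - T b" using minus_as_add[OF c(2) c(1)] by simp
  finally show ?thesis .
qed

lemma schatten2_nonneg: "schatten2 A \<ge> 0"
  unfolding schatten2_def by (auto intro!: sum_nonneg)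

lemma schatten2_zero:
  assumes "A \<in> carrier_mat d d" "schatten2 A = 0"
  shows "A = 0\<^sub>m d d"
proof (rule eq_matI)
  fix i j assume ij: "i < dim_row (0\<^sub>m d d :: complex mat)" "j < dim_col (0\<^sub>m d d :: complex mat)"
  have s: "(\<Sum>i<d. \<Sum>j<d. (cmod (A $$ (i, j)))\<^sup>2) = 0"
    using assms unfolding schatten2_def by simp
  have "\<forall>i\<in>{..<d}. (\<Sum>j<d. (cmod (A $$ (i, j)))\<^sup>2) = 0"
    using s by (subst sum_nonneg_eq_0_iff[symmetric]) (auto intro!: sum_nonneg)
  then have "\<forall>i<d. \<forall>j<d. (cmod (A $$ (i, j)))\<^sup>2 = 0"
    by (simp add: sum_nonneg_eq_0_iff)
  then show "A $$ (i, j) = 0\<^sub>m d d $$ (i, j)" using ij by simp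
qed (use assms in auto)

lemma entry_le:
  assumes "i < dim_row A" "j < dim_col A"
  shows "cmod (A $$ (i, j)) \<le> schatten2 A"
proof -
  have "(cmod (A $$ (i, j)))\<^sup>2 \<le> (\<Sum>j<dim_col A. (cmod (A $$ (i, j)))\<^sup>2)"
    using assms by (intro member_le_sum) auto
  also have "\<dots> \<le> (\<Sum>i<dim_row A. \<Sum>j<dim_col A. (cmod (A $$ (i, j)))\<^sup>2)"
    using assms by (intro member_le_sum[where f = "\<lambda>i. \<Sum>j<dim_col A. (cmod (A $$ (i, j)))\<^sup>2"]) (auto intro!: sum_nonneg)
  finally show ?thesis unfolding schatten2_def by (simp add: real_le_rsqrt)
qed

lemma T_density:
  assumes "CPTP d T" "density_op d \<rho>"
  shows "density_op d (T \<rho>)"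
proof -
  have car: "\<rho> \<in> carrier_mat d d" using dens_carrier assms(2) .
  have lin: "linear_map_mat d T" using assms(1) unfolding CPTP_def by auto
  have Tc: "T \<rho> \<in> carrier_mat d d" using lin car unfolding linear_map_mat_def by auto
  have "id_tensor 1 d T \<rho> = T \<rho>"
  proof (rule eq_matI)
    fix i j assume ij: "i < dim_row (T \<rho>)" "j < dim_col (T \<rho>)"
    have b: "block_of d \<rho> 0 0 = \<rho>" unfolding block_of_def using car by (intro eq_matI) auto
    show "id_tensor 1 d T \<rho> $$ (i, j) = T \<rho> $$ (i, j)"
      using ij Tc b unfolding id_tensor_def by auto
  qed (use Tc in \<open>auto simp: id_tensor_def\<close>)
  moreover have "psd_mat (1 * d) (id_tensor 1 d T \<rho>)"
    using assms unfolding CPTP_def completely_positive_def density_op_def by auto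
  moreover have "mat_trace (T \<rho>) = 1"
    using assms car unfolding CPTP_def trace_preserving_def density_op_def by auto
  ultimately show ?thesis unfolding density_op_def by simp
qed

lemma quad_two:
  fixes A :: "complex mat" and c :: complex
  assumes "i < d" "j < d" "i \<noteq> j"
  defines "v \<equiv> vec d (\<lambda>p. if p = i then 1 else if p = j then c else 0)"
  shows "(\<Sum>p<d. \<Sum>q<d. cnj (v $ p) * A $$ (p, q) * v $ q)
         = A $$ (i, i) + A $$ (i, j) * c + cnj c * A $$ (j, i) + cnj c * A $$ (j, j) * c"
proof -
  have vp: "\<And>p. p < d \<Longrightarrow> v $ p = (if p = i then 1 else 0) + (if p = j then c else 0)"
    using assms(3) unfolding v_def by auto
  have inner: "\<And>p. (\<Sum>q<d. cnj (v $ p) * A $$ (p, q) * v $ q) = cnj (v $ p) * (A $$ (p, i) + A $$ (p, j) * c)"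
  proof -
    fix p
    have "(\<Sum>q<d. cnj (v $ p) * A $$ (p, q) * v $ q) = (\<Sum>q<d. cnj (v $ p) * ((if q = i then A $$ (p, i) else 0) + (if q = j then A $$ (p, j) * c else 0)))"
      using assms(3) by (intro sum.cong) (auto simp: vp)
    also have "\<dots> = cnj (v $ p) * (A $$ (p, i) + A $$ (p, j) * c)"
      using assms(1,2,3) by (simp add: sum_distrib_left[symmetric] sum.distrib)
    finally show "(\<Sum>q<d. cnj (v $ p) * A $$ (p, q) * v $ q) = cnj (v $ p) * (A $$ (p, i) + A $$ (p, j) * c)" .
  qed
  have "(\<Sum>p<d. \<Sum>q<d. cnj (v $ p) * A $$ (p, q) * v $ q) = (\<Sum>p<d. (if p = i then (A $$ (i, i) + A $$ (i, j) * c) else 0) + (if p = j then cnj c * (A $$ (j, i) + A $$ (j, j) * c) else 0))"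
    unfolding inner using assms(3) by (intro sum.cong) (auto simp: vp)
  also have "\<dots> = A $$ (i, i) + A $$ (i, j) * c + cnj c * A $$ (j, i) + cnj c * A $$ (j, j) * c"
    using assms(1,2) by (simp add: sum.distrib algebra_simps)
  finally show ?thesis .
qed

lemma quad_one:
  fixes A :: "complex mat"
  assumes "i < d"
  shows "(\<Sum>p<d. \<Sum>q<d. cnj (unit_vec d i $ p) * A $$ (p, q) * unit_vec d i $ q) = A $$ (i, i)"
proof -
  have "(\<Sum>p<d. \<Sum>q<d. cnj (unit_vec d i $ p) * A $$ (p, q) * unit_vec d i $ q) = (\<Sum>p<d. if p = i then A $$ (i, i) else 0)"
  proof (rule sum.cong)
    fix p assume p: "p \<in> {..<d}"
    have "(\<Sum>q<d. cnj (unit_vec d i $ p) * A $$ (p, q) * unit_vec d i $ q) = (\<Sum>q<d. if q = i then cnj (unit_vec d i $ p) * A $$ (p, i) else 0)"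
      using assms by (intro sum.cong) (auto simp: unit_vec_def)
    also have "\<dots> = cnj (unit_vec d i $ p) * A $$ (p, i)" using assms by simp
    finally show "(\<Sum>q<d. cnj (unit_vec d i $ p) * A $$ (p, q) * unit_vec d i $ q) = (if p = i then A $$ (i, i) else 0)"
      using p assms by (auto simp: unit_vec_def)
  qed simp
  also have "\<dots> = A $$ (i, i)" using assms by simp
  finally show ?thesis .
qed

lemma dens_diag:
  assumes "density_op d \<rho>" "i < d"
  shows "Im (\<rho> $$ (i, i)) = 0" "0 \<le> Re (\<rho> $$ (i, i))" "Re (\<rho> $$ (i, i)) \<le> 1"
proof -
  have p: "psd_mat d \<rho>" using assms(1) unfolding density_op_def by blast
  have h: "hermitian_mat d \<rho>" using p unfolding psd_mat_def by blast
  have car: "\<rho> \<in> carrier_mat d d" using dens_carrier[OF assms(1)] .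
  have dr: "dim_row \<rho> = d" using car by auto
  have "mat_trace \<rho> = 1" using assms(1) unfolding density_op_def by blast
  then have tr: "(\<Sum>i<d. \<rho> $$ (i, i)) = 1" unfolding mat_trace_def dr .
  have "\<rho> $$ (i, i) = cnj (\<rho> $$ (i, i))" using h assms(2) unfolding hermitian_mat_def by blast
  then have "Im (\<rho> $$ (i, i)) = Im (cnj (\<rho> $$ (i, i)))" by (rule arg_cong)
  then show im: "Im (\<rho> $$ (i, i)) = 0" by simp
  have nn: "\<And>i. i < d \<Longrightarrow> 0 \<le> Re (\<rho> $$ (i, i))"
  proof -
    fix i assume i: "i < d"
    have "unit_vec d i \<in> carrier_vec d" by simp
    then have "0 \<le> Re (\<Sum>p<d. \<Sum>q<d. cnj (unit_vec d i $ p) * \<rho> $$ (p, q) * unit_vec d i $ q)"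
      using p unfolding psd_mat_def by blast
    then show "0 \<le> Re (\<rho> $$ (i, i))" using quad_one[OF i] by simp
  qed
  show "0 \<le> Re (\<rho> $$ (i, i))" using nn assms(2) .
  have "(\<Sum>i<d. Re (\<rho> $$ (i, i))) = 1" using arg_cong[OF tr, of Re] by (simp add: Re_sum)
  moreover have "Re (\<rho> $$ (i, i)) \<le> (\<Sum>i<d. Re (\<rho> $$ (i, i)))"
    using assms(2) nn by (intro member_le_sum) auto
  ultimately show "Re (\<rho> $$ (i, i)) \<le> 1" by simp
qed

lemma dens_entry:
  assumes "density_op d \<rho>" "i < d" "j < d"
  shows "cmod (\<rho> $$ (i, j)) \<le> 2"
proof (cases "i = j")
  case True
  then show ?thesis using dens_diag[OF assms(1,2)] cmod_le[of "\<rho> $$ (i, i)"] by auto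
next
  case False
  have h: "hermitian_mat d \<rho>" and p: "psd_mat d \<rho>"
    using assms unfolding density_op_def psd_mat_def by auto
  have herm: "\<rho> $$ (j, i) = cnj (\<rho> $$ (i, j))" using h assms unfolding hermitian_mat_def by blast
  have key: "0 \<le> Re (\<rho> $$ (i, i) + \<rho> $$ (i, j) * c + cnj c * \<rho> $$ (j, i) + cnj c * \<rho> $$ (j, j) * c)" for c
  proof -
    let ?v = "vec d (\<lambda>p. if p = i then 1 else if p = j then c else 0) :: complex vec"
    have "?v \<in> carrier_vec d" by simp
    then have "0 \<le> Re (\<Sum>p<d. \<Sum>q<d. cnj (?v $ p) * \<rho> $$ (p, q) * ?v $ q)"
      using p unfolding psd_mat_def by blast
    then show ?thesis by (simp only: quad_two[OF assms(2,3) False, where A = \<rho> and c = c])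
  qed
  have di: "Im (\<rho> $$ (i, i)) = 0" "0 \<le> Re (\<rho> $$ (i, i))" "Re (\<rho> $$ (i, i)) \<le> 1"
    using dens_diag[OF assms(1,2)] by auto
  have dj: "Im (\<rho> $$ (j, j)) = 0" "0 \<le> Re (\<rho> $$ (j, j))" "Re (\<rho> $$ (j, j)) \<le> 1"
    using dens_diag[OF assms(1,3)] by auto
  have k1: "0 \<le> Re (\<rho> $$ (i, i)) + 2 * Re (\<rho> $$ (i, j)) + Re (\<rho> $$ (j, j))"
    using key[of 1] herm by simp
  have k2: "0 \<le> Re (\<rho> $$ (i, i)) - 2 * Re (\<rho> $$ (i, j)) + Re (\<rho> $$ (j, j))"
    using key[of "-1"] herm by simp
  have k3: "0 \<le> Re (\<rho> $$ (i, i)) - 2 * Im (\<rho> $$ (i, j)) + Re (\<rho> $$ (j, j))"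
    using key[of "\<i>"] herm by simp
  have k4: "0 \<le> Re (\<rho> $$ (i, i)) + 2 * Im (\<rho> $$ (i, j)) + Re (\<rho> $$ (j, j))"
    using key[of "-\<i>"] herm by simp
  have "\<bar>Re (\<rho> $$ (i, j))\<bar> \<le> 1" "\<bar>Im (\<rho> $$ (i, j))\<bar> \<le> 1" using k1 k2 k3 k4 di dj by auto
  then show ?thesis using cmod_le[of "\<rho> $$ (i, j)"] by linarith
qed


lemma schatten2_zero_mat: "schatten2 (0\<^sub>m d d :: complex mat) = 0"
  unfolding schatten2_def by simp

lemma schatten2_self: "(A :: complex mat) \<in> carrier_mat d d \<Longrightarrow> schatten2 (A - A) = 0"
  unfolding schatten2_def by simp

lemma contr_step:
  assumes "CPTP d S" "\<forall>A. hermitian_mat d A \<and> mat_trace A = 0 \<and> A \<noteq> 0\<^sub>m d d \<longrightarrow> schatten2 (S A) / schatten2 A \<le> c"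
    "density_op d a" "density_op d b" "0 \<le> c"
  shows "schatten2 (S a - S b) \<le> c * schatten2 (a - b)"
proof (cases "a = b")
  case True
  have "S b \<in> carrier_mat d d" using assms(1) dens_carrier[OF assms(4)] unfolding CPTP_def linear_map_mat_def by auto
  then show ?thesis using True schatten2_self[of "S b" d] schatten2_nonneg[of "b - b"] assms(5) by simp
next
  case False
  have ca: "a \<in> carrier_mat d d" and cb: "b \<in> carrier_mat d d" using assms(3,4) dens_carrier by auto
  have lin: "linear_map_mat d S" using assms(1) unfolding CPTP_def by auto
  have cA: "a - b \<in> carrier_mat d d" using ca cb by (simp add: minus_carrier_mat)
  have nz: "a - b \<noteq> 0\<^sub>m d d"
  proof
    assume "a - b = 0\<^sub>m d d"
    note z = this
    have "a = b"
    proof (rule eq_matI)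
      fix i j assume ij: "i < dim_row b" "j < dim_col b"
      then have "(a - b) $$ (i, j) = 0" using z cb by simp
      then show "a $$ (i, j) = b $$ (i, j)" using ij ca cb by simp
    qed (use ca cb in auto)
    then show False using False by simp
  qed
  have ha: "hermitian_mat d a" and hb: "hermitian_mat d b" using assms(3,4) unfolding density_op_def psd_mat_def by auto
  have herm: "hermitian_mat d (a - b)"
    unfolding hermitian_mat_def
  proof (intro conjI allI impI)
    show "a - b \<in> carrier_mat d d" using cA .
    fix i j assume ij: "i < d" "j < d"
    have e: "a $$ (j, i) = cnj (a $$ (i, j))" "b $$ (j, i) = cnj (b $$ (i, j))"
      using ha hb ij unfolding hermitian_mat_def by blast+
    have "(a - b) $$ (j, i) = a $$ (j, i) - b $$ (j, i)" "(a - b) $$ (i, j) = a $$ (i, j) - b $$ (i, j)"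
      using ij cb by auto
    then show "(a - b) $$ (j, i) = cnj ((a - b) $$ (i, j))" using e by simp
  qed
  have tra: "mat_trace a = 1" "mat_trace b = 1" using assms(3,4) unfolding density_op_def by auto
  have "mat_trace (a - b) = (\<Sum>i<d. a $$ (i, i) - b $$ (i, i))"
    unfolding mat_trace_def using ca cb by (intro sum.cong) auto
  also have "\<dots> = mat_trace a - mat_trace b" unfolding mat_trace_def using ca cb by (simp add: sum_subtractf)
  finally have tr0: "mat_trace (a - b) = 0" using tra by simp
  have pos: "schatten2 (a - b) > 0"
    using schatten2_nonneg[of "a - b"] schatten2_zero[OF cA] nz by fastforce
  have "schatten2 (S (a - b)) / schatten2 (a - b) \<le> c" using assms(2) herm tr0 nz by blast
  then have "schatten2 (S (a - b)) \<le> c * schatten2 (a - b)" using pos by (simp add: divide_le_eq)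
  then show ?thesis using lin_minus[OF lin ca cb] by simp
qed

lemma chain_dens:
  assumes "\<forall>m. CPTP d (T (u m))" "density_op d \<rho>"
  shows "density_op d (chain T u k N \<rho>)"
  using assms(2)
proof (induction N arbitrary: \<rho>)
  case 0
  then show ?case using T_density assms(1) by simp
next
  case (Suc N)
  then show ?case using T_density assms(1) by simp
qed

lemma chain_contr:
  assumes "\<forall>m. CPTP d (T (u m))"
    "\<forall>m. \<forall>A. hermitian_mat d A \<and> mat_trace A = 0 \<and> A \<noteq> 0\<^sub>m d d \<longrightarrow> schatten2 (T (u m) A) / schatten2 A \<le> c"
    "0 \<le> c" "density_op d a" "density_op d b"
  shows "schatten2 (chain T u k N a - chain T u k N b) \<le> c ^ (N + 1) * schatten2 (a - b)"
  using assms(4,5)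
proof (induction N arbitrary: a b)
  case 0
  then show ?case using contr_step[of d "T (u k)" c a b] assms(1,2,3) by simp
next
  case (Suc N)
  let ?S = "T (u (k - int N - 1))"
  have "schatten2 (chain T u k (Suc N) a - chain T u k (Suc N) b)
      = schatten2 (chain T u k N (?S a) - chain T u k N (?S b))" by simp
  also have "\<dots> \<le> c ^ (N + 1) * schatten2 (?S a - ?S b)"
    using Suc.IH T_density assms(1) Suc.prems by blast
  also have "\<dots> \<le> c ^ (N + 1) * (c * schatten2 (a - b))"
    using contr_step[of d ?S c a b] assms(1,2,3) Suc.prems by (intro mult_left_mono) auto
  finally show ?case by (simp add: algebra_simps)
qed

lemma chain_split:
  assumes "\<forall>m. CPTP d (T (u m))" "density_op d \<rho>"
  shows "\<exists>y. density_op d y \<and> chain T u k (N + M) \<rho> = chain T u k N y"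
  using assms(2)
proof (induction M arbitrary: \<rho>)
  case 0
  then show ?case by auto
next
  case (Suc M)
  have "chain T u k (N + Suc M) \<rho> = chain T u k (N + M) (T (u (k - int (N + M) - 1)) \<rho>)"
    by simp
  moreover have "density_op d (T (u (k - int (N + M) - 1)) \<rho>)" using T_density assms(1) Suc.prems by blast
  ultimately show ?case using Suc.IH[OF \<open>density_op d (T (u (k - int (N + M) - 1)) \<rho>)\<close>] by simp
qed

lemma dens_diff_bound:
  assumes "density_op d a" "density_op d b"
  shows "schatten2 (a - b) \<le> 4 * real d"
proof -
  have ca: "a \<in> carrier_mat d d" and cb: "b \<in> carrier_mat d d" using assms dens_carrier by auto
  have e: "(cmod ((a - b) $$ (i, j)))\<^sup>2 \<le> 16" if "i < d" "j < d" for i j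
  proof -
    have "cmod ((a - b) $$ (i, j)) = cmod (a $$ (i, j) - b $$ (i, j))" using that ca cb by simp
    also have "\<dots> \<le> cmod (a $$ (i, j)) + cmod (b $$ (i, j))" by (rule norm_triangle_ineq4)
    also have "\<dots> \<le> 4" using dens_entry[OF assms(1) that] dens_entry[OF assms(2) that] by simp
    finally have "cmod ((a - b) $$ (i, j)) \<le> 4" .
    then have "(cmod ((a - b) $$ (i, j)))\<^sup>2 \<le> 4\<^sup>2" by (intro power_mono) auto
    then show ?thesis by simp
  qed
  have "(\<Sum>i<d. \<Sum>j<d. (cmod ((a - b) $$ (i, j)))\<^sup>2) \<le> (\<Sum>i<d. \<Sum>j<d. (16::real))"
    using e by (intro sum_mono) auto
  also have "\<dots> = (4 * real d)\<^sup>2" by (simp add: power2_eq_square)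
  finally have "sqrt (\<Sum>i<d. \<Sum>j<d. (cmod ((a - b) $$ (i, j)))\<^sup>2) \<le> 4 * real d"
    by (simp add: real_sqrt_le_iff real_le_lsqrt)
  moreover have "dim_row (a - b) = d" "dim_col (a - b) = d" using ca cb by auto
  ultimately show ?thesis unfolding schatten2_def by simp
qed

lemma schatten2_tendsto:
  assumes "\<forall>N. E N \<in> carrier_mat d d" "\<forall>i<d. \<forall>j<d. (\<lambda>N. E N $$ (i, j)) \<longlonglongrightarrow> 0"
  shows "(\<lambda>N. schatten2 (E N)) \<longlonglongrightarrow> 0"
proof -
  have eq: "(\<lambda>N. schatten2 (E N)) = (\<lambda>N. sqrt (\<Sum>i<d. \<Sum>j<d. (cmod (E N $$ (i, j)))\<^sup>2))"
  proof
    fix N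
    have "dim_row (E N) = d" "dim_col (E N) = d" using assms by auto
    then show "schatten2 (E N) = sqrt (\<Sum>i<d. \<Sum>j<d. (cmod (E N $$ (i, j)))\<^sup>2)" unfolding schatten2_def by simp
  qed
  have "(\<lambda>N. sqrt (\<Sum>i<d. \<Sum>j<d. (cmod (E N $$ (i, j)))\<^sup>2)) \<longlonglongrightarrow> sqrt (\<Sum>i<d. \<Sum>j<d. (cmod (0::complex))\<^sup>2)"
  proof (intro tendsto_intros)
    fix i j assume "i \<in> {..<d}" "j \<in> {..<d}"
    then show "(\<lambda>N. E N $$ (i, j)) \<longlonglongrightarrow> 0" using assms by auto
  qed
  then show ?thesis unfolding eq by simp
qed

lemma geo_tendsto:
  fixes c B :: real
  assumes "0 \<le> c" "c < 1"
  shows "(\<lambda>N. c ^ (N + 1) * B) \<longlonglongrightarrow> 0"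
proof -
  have "norm c < 1" using assms by simp
  then have "(\<lambda>N. c ^ N) \<longlonglongrightarrow> 0" by (rule LIMSEQ_power_zero)
  then have "(\<lambda>N. c * c ^ N * B) \<longlonglongrightarrow> c * 0 * B" by (intro tendsto_mult tendsto_const)
  moreover have "(\<lambda>N. c ^ (N + 1) * B) = (\<lambda>N. c * c ^ N * B)" by auto
  ultimately show ?thesis by simp
qed

lemma rho0_density:
  assumes "0 < d"
  shows "density_op d (mat d d (\<lambda>(i, j). if i = 0 \<and> j = 0 then 1 else 0))" (is "density_op d ?r")
proof -
  have h: "hermitian_mat d ?r" unfolding hermitian_mat_def by auto
  have "0 \<le> Re (\<Sum>i<d. \<Sum>j<d. cnj (v $ i) * ?r $$ (i, j) * v $ j)" for v :: "complex vec"
  proof -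
    have inner: "(\<Sum>j<d. cnj (v $ i) * ?r $$ (i, j) * v $ j) = (if i = 0 then cnj (v $ 0) * v $ 0 else 0)"
      if "i < d" for i
    proof -
      have "(\<Sum>j<d. cnj (v $ i) * ?r $$ (i, j) * v $ j) = (\<Sum>j<d. if j = 0 then (if i = 0 then cnj (v $ 0) * v $ 0 else 0) else 0)"
        using that by (intro sum.cong) auto
      also have "\<dots> = (if i = 0 then cnj (v $ 0) * v $ 0 else 0)" using assms by simp
      finally show ?thesis .
    qed
    have "(\<Sum>i<d. \<Sum>j<d. cnj (v $ i) * ?r $$ (i, j) * v $ j) = (\<Sum>i<d. if i = 0 then cnj (v $ 0) * v $ 0 else 0)"
      using inner by (intro sum.cong) auto
    also have "\<dots> = cnj (v $ 0) * v $ 0" using assms by simp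
    finally show ?thesis by (simp add: mult.commute complex_mult_cnj)
  qed
  moreover have "mat_trace ?r = 1"
  proof -
    have "mat_trace ?r = (\<Sum>i<d. if i = 0 then 1 else 0)" unfolding mat_trace_def by (intro sum.cong) auto
    then show ?thesis using assms by simp
  qed
  ultimately show ?thesis using h unfolding density_op_def psd_mat_def by auto
qed

theorem lemma1:
  fixes n :: nat and L \<epsilon> :: real and D :: "real set"
    and T :: "real \<Rightarrow> complex mat \<Rightarrow> complex mat"
  assumes "n \<ge> 1" and "L > 0" and "compact D"
    and "\<forall>x \<in> D \<inter> {-L..L}. CPTP (2 ^ n) (T x)"
    and "0 < \<epsilon>" and "\<epsilon> \<le> 1"
    and "\<forall>x \<in> D \<inter> {-L..L}. \<forall>A. hermitian_mat (2 ^ n) A \<and> mat_trace A = 0 \<and> A \<noteq> 0\<^sub>m (2 ^ n) (2 ^ n)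
           \<longrightarrow> schatten2 (T x A) / schatten2 A \<le> 1 - \<epsilon>"
  shows "\<forall>u \<in> K_L L D. \<forall>k :: int. \<exists>\<sigma>. density_op (2 ^ n) \<sigma> \<and>
           (\<forall>\<rho> :: nat \<Rightarrow> complex mat. (\<forall>N. density_op (2 ^ n) (\<rho> N)) \<longrightarrow>
              (\<lambda>N. schatten2 (chain T u k N (\<rho> N) - \<sigma>)) \<longlonglongrightarrow> 0)"
proof (intro ballI allI)
  fix u k assume uK: "u \<in> K_L L D"
  define d :: nat where "d = 2 ^ n"
  define c where "c = 1 - \<epsilon>"
  have d0: "0 < d" unfolding d_def by simp
  have c0: "0 \<le> c" "c < 1" unfolding c_def using assms(5,6) by auto
  have um: "u m \<in> D \<inter> {-L..L}" for m using uK unfolding K_L_def by auto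
  have H: "\<forall>m. CPTP d (T (u m))" using um assms(4) unfolding d_def by blast
  have C: "\<forall>m. \<forall>A. hermitian_mat d A \<and> mat_trace A = 0 \<and> A \<noteq> 0\<^sub>m d d \<longrightarrow> schatten2 (T (u m) A) / schatten2 A \<le> c"
  proof (rule allI)
    fix m show "\<forall>A. hermitian_mat d A \<and> mat_trace A = 0 \<and> A \<noteq> 0\<^sub>m d d \<longrightarrow> schatten2 (T (u m) A) / schatten2 A \<le> c"
      using bspec[OF assms(7) um[of m]] unfolding d_def c_def by simp
  qed
  define r0 :: "complex mat" where "r0 = mat d d (\<lambda>(i, j). if i = 0 \<and> j = 0 then 1 else 0)"
  have r0d: "density_op d r0" unfolding r0_def using rho0_density[OF d0] .
  define x where "x N = chain T u k N r0" for N
  have xd: "density_op d (x N)" for N unfolding x_def using chain_dens[OF H r0d] .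
  have xc: "x N \<in> carrier_mat d d" for N using dens_carrier[OF xd] .
  have xr: "dim_row (x N) = d" "dim_col (x N) = d" for N using xc[of N] by auto
  define g where "g N = c ^ (N + 1) * (4 * real d)" for N
  have g0: "g \<longlonglongrightarrow> 0" unfolding g_def using geo_tendsto[OF c0] .
  have gmono: "g M \<le> g N" if "N \<le> M" for N M
    unfolding g_def using c0 that by (intro mult_right_mono power_decreasing) auto
  have gcmp: "schatten2 (chain T u k N a - chain T u k N b) \<le> g N" if "density_op d a" "density_op d b" for N a b
  proof -
    have "schatten2 (chain T u k N a - chain T u k N b) \<le> c ^ (N + 1) * schatten2 (a - b)"
      using chain_contr[OF H C c0(1) that] .
    also have "\<dots> \<le> c ^ (N + 1) * (4 * real d)"
      using dens_diff_bound[OF that] c0 by (intro mult_left_mono) auto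
    finally show ?thesis unfolding g_def .
  qed
  have bnd: "cmod (x M $$ (i, j) - x N $$ (i, j)) \<le> g N" if "N \<le> M" "i < d" "j < d" for N M i j
  proof -
    obtain y where y: "density_op d y" "chain T u k (N + (M - N)) r0 = chain T u k N y"
      using chain_split[OF H r0d] by blast
    have xM: "x M = chain T u k N y" using y(2) that(1) unfolding x_def by simp
    have "cmod ((x M - x N) $$ (i, j)) \<le> schatten2 (x M - x N)"
      using xr that by (intro entry_le) auto
    also have "\<dots> = schatten2 (chain T u k N y - chain T u k N r0)" using xM by (simp add: x_def)
    also have "\<dots> \<le> g N" using gcmp[OF y(1) r0d] .
    finally show ?thesis using xr that by simp
  qed
  have conv: "convergent (\<lambda>N. x N $$ (i, j))" if "i < d" "j < d" for i j
  proof -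
    have "Cauchy (\<lambda>N. x N $$ (i, j))"
    proof (rule metric_CauchyI)
      fix e :: real assume e: "0 < e"
      obtain N0 where N0: "\<forall>N\<ge>N0. norm (g N - 0) < e / 2" using LIMSEQ_D[OF g0, of "e / 2"] e by auto
      have "norm (g N0 - 0) < e / 2" using N0 by simp
      then have gN0: "g N0 < e / 2" by simp
      show "\<exists>M. \<forall>m\<ge>M. \<forall>n\<ge>M. dist (x m $$ (i, j)) (x n $$ (i, j)) < e"
      proof (intro exI allI impI)
        fix m n assume mn: "N0 \<le> m" "N0 \<le> n"
        have "dist (x m $$ (i, j)) (x n $$ (i, j)) \<le> dist (x m $$ (i, j)) (x N0 $$ (i, j)) + dist (x n $$ (i, j)) (x N0 $$ (i, j))"
          by (rule dist_triangle2)
        also have "\<dots> \<le> g N0 + g N0"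
          using bnd[OF mn(1) that] bnd[OF mn(2) that] by (simp add: dist_norm add_mono)
        finally show "dist (x m $$ (i, j)) (x n $$ (i, j)) < e" using gN0 by simp
      qed
    qed
    then show ?thesis using Cauchy_convergent_iff by blast
  qed
  define \<sigma> :: "complex mat" where "\<sigma> = mat d d (\<lambda>(i, j). lim (\<lambda>N. x N $$ (i, j)))"
  have sc: "\<sigma> \<in> carrier_mat d d" unfolding \<sigma>_def by simp
  have sconv: "(\<lambda>N. x N $$ (i, j)) \<longlonglongrightarrow> \<sigma> $$ (i, j)" if "i < d" "j < d" for i j
    using conv[OF that] that unfolding \<sigma>_def by (simp add: convergent_LIMSEQ_iff)
  have sdens: "density_op d \<sigma>"
  proof -
    have herm: "\<sigma> $$ (j, i) = cnj (\<sigma> $$ (i, j))" if "i < d" "j < d" for i j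
    proof -
      have "\<forall>N. x N $$ (j, i) = cnj (x N $$ (i, j))"
      proof
        fix N have "hermitian_mat d (x N)" using xd[of N] unfolding density_op_def psd_mat_def by simp
        then show "x N $$ (j, i) = cnj (x N $$ (i, j))" using that unfolding hermitian_mat_def by blast
      qed
      then have "(\<lambda>N. x N $$ (j, i)) = (\<lambda>N. cnj (x N $$ (i, j)))" by auto
      moreover have "(\<lambda>N. cnj (x N $$ (i, j))) \<longlonglongrightarrow> cnj (\<sigma> $$ (i, j))"
        using sconv[OF that] by (intro tendsto_intros)
      ultimately have "(\<lambda>N. x N $$ (j, i)) \<longlonglongrightarrow> cnj (\<sigma> $$ (i, j))" by simp
      then show ?thesis using LIMSEQ_unique[OF sconv[OF that(2,1)]] by simp
    qed
    have psd: "0 \<le> Re (\<Sum>i<d. \<Sum>j<d. cnj (v $ i) * \<sigma> $$ (i, j) * v $ j)" if "v \<in> carrier_vec d" for v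
    proof -
      have "(\<lambda>N. Re (\<Sum>i<d. \<Sum>j<d. cnj (v $ i) * x N $$ (i, j) * v $ j)) \<longlonglongrightarrow> Re (\<Sum>i<d. \<Sum>j<d. cnj (v $ i) * \<sigma> $$ (i, j) * v $ j)"
      proof (intro tendsto_intros)
        fix i j assume "i \<in> {..<d}" "j \<in> {..<d}"
        then show "(\<lambda>N. x N $$ (i, j)) \<longlonglongrightarrow> \<sigma> $$ (i, j)" using sconv by auto
      qed
      moreover have "\<forall>N. 0 \<le> Re (\<Sum>i<d. \<Sum>j<d. cnj (v $ i) * x N $$ (i, j) * v $ j)"
      proof
        fix N show "0 \<le> Re (\<Sum>i<d. \<Sum>j<d. cnj (v $ i) * x N $$ (i, j) * v $ j)"
          using xd[of N] that unfolding density_op_def psd_mat_def by simp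
      qed
      ultimately show ?thesis by (intro LIMSEQ_le_const) auto
    qed
    have tr: "mat_trace \<sigma> = 1"
    proof -
      have "(\<lambda>N. \<Sum>i<d. x N $$ (i, i)) \<longlonglongrightarrow> (\<Sum>i<d. \<sigma> $$ (i, i))"
      proof (intro tendsto_intros)
        fix i assume "i \<in> {..<d}"
        then show "(\<lambda>N. x N $$ (i, i)) \<longlonglongrightarrow> \<sigma> $$ (i, i)" using sconv by auto
      qed
      moreover have "(\<lambda>N. \<Sum>i<d. x N $$ (i, i)) = (\<lambda>N. 1)"
      proof
        fix N show "(\<Sum>i<d. x N $$ (i, i)) = 1" using xd[of N] xr[of N] unfolding density_op_def mat_trace_def by simp
      qed
      ultimately have "(\<Sum>i<d. \<sigma> $$ (i, i)) = 1" by (simp add: LIMSEQ_const_iff)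
      then show ?thesis using sc unfolding mat_trace_def by simp
    qed
    have "hermitian_mat d \<sigma>" unfolding hermitian_mat_def using sc herm by blast
    then have "psd_mat d \<sigma>" unfolding psd_mat_def using psd by blast
    then show ?thesis unfolding density_op_def using tr by blast
  qed
  show "\<exists>\<sigma>. density_op (2 ^ n) \<sigma> \<and>
           (\<forall>\<rho> :: nat \<Rightarrow> complex mat. (\<forall>N. density_op (2 ^ n) (\<rho> N)) \<longrightarrow>
              (\<lambda>N. schatten2 (chain T u k N (\<rho> N) - \<sigma>)) \<longlonglongrightarrow> 0)"
  proof (intro exI conjI allI impI)
    show "density_op (2 ^ n) \<sigma>" using sdens unfolding d_def .
    fix \<rho> :: "nat \<Rightarrow> complex mat" assume \<rho>: "\<forall>N. density_op (2 ^ n) (\<rho> N)"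
    then have \<rho>d: "density_op d (\<rho> N)" for N unfolding d_def by blast
    have cd: "chain T u k N (\<rho> N) \<in> carrier_mat d d" for N using dens_carrier[OF chain_dens[OF H \<rho>d]] .
    show "(\<lambda>N. schatten2 (chain T u k N (\<rho> N) - \<sigma>)) \<longlonglongrightarrow> 0"
    proof (rule schatten2_tendsto[where d = d])
      show "\<forall>N. chain T u k N (\<rho> N) - \<sigma> \<in> carrier_mat d d" using sc by (simp add: minus_carrier_mat)
      show "\<forall>i<d. \<forall>j<d. (\<lambda>N. (chain T u k N (\<rho> N) - \<sigma>) $$ (i, j)) \<longlonglongrightarrow> 0"
      proof (intro allI impI)
        fix i j assume ij: "i < d" "j < d"
        have eq: "(chain T u k N (\<rho> N) - \<sigma>) $$ (i, j) = (chain T u k N (\<rho> N) $$ (i, j) - x N $$ (i, j)) + (x N $$ (i, j) - \<sigma> $$ (i, j))" for N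
          using sc ij by simp
        have t1: "(\<lambda>N. chain T u k N (\<rho> N) $$ (i, j) - x N $$ (i, j)) \<longlonglongrightarrow> 0"
        proof (rule tendsto_0_le[OF g0, where K = 1])
          show "\<forall>\<^sub>F N in sequentially. norm (chain T u k N (\<rho> N) $$ (i, j) - x N $$ (i, j)) \<le> norm (g N) * 1"
          proof (intro always_eventually allI)
            fix N
            have "cmod ((chain T u k N (\<rho> N) - x N) $$ (i, j)) \<le> schatten2 (chain T u k N (\<rho> N) - x N)"
              using xr ij by (intro entry_le) auto
            also have "\<dots> \<le> g N" unfolding x_def using gcmp[OF \<rho>d r0d] .
            finally show "norm (chain T u k N (\<rho> N) $$ (i, j) - x N $$ (i, j)) \<le> norm (g N) * 1" using xr ij by simp
          qed
        qed
        have t2: "(\<lambda>N. x N $$ (i, j) - \<sigma> $$ (i, j)) \<longlonglongrightarrow> 0"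
          using tendsto_diff[OF sconv[OF ij] tendsto_const[of "\<sigma> $$ (i, j)"]] by simp
        show "(\<lambda>N. (chain T u k N (\<rho> N) - \<sigma>) $$ (i, j)) \<longlonglongrightarrow> 0"
          unfolding eq using tendsto_add_zero[OF t1 t2] .
      qed
    qed
  qed
qed

end
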